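(* Let $M=(E,r)$ be a matroid with $E$ nonempty, and write $r(M)=r(E)$. Then \[ Q'_M(x,y)=\frac{x^{|E|-r(M)}\,y^{r(M)}}{x+y-1}\cdot T_M\!\left(\frac{x+y-1}{y},\ \frac{x+y-1}{x}\right), \] as an identity of rational functions.
   Context: For a polymatroid (in particular a matroid) $M=(E,r)$ with ground set $E$, a base is a vector $\mathbf x\in\mathbb Z^E$ with $\sum_{i\in E}x_i=r(E)$ and $\sum_{i\in S}x_i\le r(S)$ for all $S\subseteq E$; $P(M)$ is the convex hull of the bases. For a matroid, the bases are exactly the indicator vectors $\mathbf e_B$ of the matroid bases $B$. Let $\Delta=\operatorname{conv}\{\mathbf e_i:i\in E\}\subseteq\mathbb R^E$ and $\nabla=-\Delta$. For integers $t,u\ge 0$ let $Q_M(t,u)=\#\big((P(M)+u\Delta+t\nabla)\cap\mathbb Z^E\big)$ (Minkowski sum). This is a polynomial in $t,u$ (of degree $|E|-1$); write it uniquely as $Q_M(t,u)=\sum_{i,j}c_{ij}\binom{u}{j}\binom{t}{i}$ and define $Q'_M(x,y)=\sum_{i,j}c_{ij}(x-1)^i(y-1)^j$. The Tutte polynomial is $T_M(x,y)=\sum_{S\subseteq E}(x-1)^{r(E)-r(S)}(y-1)^{|S|-r(S)}$. *)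

theory Defs
  imports "HOL-Analysis.Analysis"
begin

text \<open>A matroid on the finite ground set E = UNIV of the finite type 'n,
  given by its rank function (standard rank axioms).\<close>
definition matroid_rank :: "('n::finite set \<Rightarrow> nat) \<Rightarrow> bool" where
  "matroid_rank r \<longleftrightarrow>
     (\<forall>S. r S \<le> card S) \<and>
     (\<forall>S T. S \<subseteq> T \<longrightarrow> r S \<le> r T) \<and>
     (\<forall>S T. r (S \<union> T) + r (S \<inter> T) \<le> r S + r T)"

text \<open>Integer points of R^E.\<close>
definition int_points :: "(real ^ 'n) set" where
  "int_points = {x. \<forall>i. x $ i \<in> \<int>}"

text \<open>Bases of the (poly)matroid: integer vectors x with sum over E equal to r(E)
  and sum over S at most r(S) for all S.\<close>
definition bases_vec :: "('n::finite set \<Rightarrow> nat) \<Rightarrow> (real ^ 'n) set" where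
  "bases_vec r = {x \<in> int_points. (\<Sum>i\<in>UNIV. x $ i) = real (r UNIV) \<and>
                    (\<forall>S. (\<Sum>i\<in>S. x $ i) \<le> real (r S))}"

definition base_polytope :: "('n::finite set \<Rightarrow> nat) \<Rightarrow> (real ^ 'n) set" where
  "base_polytope r = convex hull (bases_vec r)"

definition simplex_Delta :: "(real ^ 'n::finite) set" where
  "simplex_Delta = convex hull (range (\<lambda>i. axis i 1))"

definition simplex_Nabla :: "(real ^ 'n::finite) set" where
  "simplex_Nabla = uminus ` simplex_Delta"

text \<open>Q_M(t,u) = number of lattice points of P(M) + u Delta + t Nabla.\<close>
definition QM :: "('n::finite set \<Rightarrow> nat) \<Rightarrow> nat \<Rightarrow> nat \<Rightarrow> nat" where
  "QM r t u = card (int_points \<inter>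
     {p + q + s | p q s. p \<in> base_polytope r \<and> q \<in> (*\<^sub>R) (real u) ` simplex_Delta
                        \<and> s \<in> (*\<^sub>R) (real t) ` simplex_Nabla})"

text \<open>Coefficient c_ij of binom(u,j) binom(t,i) in Q_M(t,u), obtained by
  Newton's forward-difference formula (which recovers the unique coefficients
  of the polynomial Q_M in the binomial basis).\<close>
definition QM_coeff :: "('n::finite set \<Rightarrow> nat) \<Rightarrow> nat \<Rightarrow> nat \<Rightarrow> real" where
  "QM_coeff r i j = (\<Sum>a\<le>i. \<Sum>b\<le>j.
      (-1) ^ (i - a + (j - b)) * real (i choose a) * real (j choose b) * real (QM r a b))"

text \<open>Q'_M(x,y) = sum_{i,j} c_ij (x-1)^i (y-1)^j.  Since Q_M has degree |E|-1,
  c_ij = 0 unless i,j < |E|, so the sum over i,j < |E| is the full sum.\<close>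
definition QM' :: "('n::finite set \<Rightarrow> nat) \<Rightarrow> real \<Rightarrow> real \<Rightarrow> real" where
  "QM' r x y = (\<Sum>i<CARD('n). \<Sum>j<CARD('n). QM_coeff r i j * (x - 1) ^ i * (y - 1) ^ j)"

definition tutte :: "('n::finite set \<Rightarrow> nat) \<Rightarrow> real \<Rightarrow> real \<Rightarrow> real" where
  "tutte r x y = (\<Sum>S\<in>UNIV. (x - 1) ^ (r UNIV - r S) * (y - 1) ^ (card S - r S))"

end

theory Submission
  imports Defs "HOL-Computational_Algebra.Polynomial"
begin

(* ---- part N1 ---- *)
definition dd :: "(nat \<Rightarrow> real) \<Rightarrow> nat \<Rightarrow> real" where
  "dd f i = (\<Sum>a\<le>i. (-1) ^ (i - a) * real (i choose a) * f a)"

lemma dd_0 [simp]: "dd f 0 = f 0" by (simp add: dd_def)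

lemma dd_Suc: "dd f (Suc i) = dd (\<lambda>a. f (Suc a)) i - dd f i"
proof -
  have A: "dd f (Suc i) = (-1) ^ Suc i * f 0 +
      (\<Sum>b\<le>i. (-1) ^ (i - b) * real (i choose b) * f (Suc b)) +
      (\<Sum>b\<le>i. (-1) ^ (i - b) * real (i choose Suc b) * f (Suc b))"
  proof -
    have "dd f (Suc i) = (\<Sum>a\<le>Suc i. (-1) ^ (Suc i - a) * real (Suc i choose a) * f a)"
      by (simp add: dd_def)
    also have "\<dots> = (-1) ^ Suc i * f 0 + (\<Sum>b\<le>i. (-1) ^ (Suc i - Suc b) * real (Suc i choose Suc b) * f (Suc b))"
      by (subst sum.atMost_Suc_shift) simp
    also have "(\<Sum>b\<le>i. (-1) ^ (Suc i - Suc b) * real (Suc i choose Suc b) * f (Suc b))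
       = (\<Sum>b\<le>i. (-1) ^ (i - b) * real (i choose b) * f (Suc b) + (-1) ^ (i - b) * real (i choose Suc b) * f (Suc b))"
      by (rule sum.cong) (simp_all add: algebra_simps)
    finally show ?thesis by (simp add: sum.distrib add.assoc)
  qed
  have B: "dd f i = (-1) ^ i * f 0 + (\<Sum>b<i. (-1) ^ (i - Suc b) * real (i choose Suc b) * f (Suc b))"
  proof (cases i)
    case 0 then show ?thesis by simp
  next
    case (Suc j)
    have "dd f i = (\<Sum>a\<le>Suc j. (-1) ^ (Suc j - a) * real (Suc j choose a) * f a)"
      by (simp add: dd_def Suc)
    also have "\<dots> = (-1) ^ Suc j * f 0 + (\<Sum>b\<le>j. (-1) ^ (Suc j - Suc b) * real (Suc j choose Suc b) * f (Suc b))"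
      by (subst sum.atMost_Suc_shift) simp
    also have "(\<Sum>b\<le>j. (-1) ^ (Suc j - Suc b) * real (Suc j choose Suc b) * f (Suc b))
       = (\<Sum>b<i. (-1) ^ (i - Suc b) * real (i choose Suc b) * f (Suc b))"
      unfolding Suc lessThan_Suc_atMost ..
    finally show ?thesis using Suc by simp
  qed
  have C: "(\<Sum>b\<le>i. (-1) ^ (i - b) * real (i choose Suc b) * f (Suc b))
         = - (\<Sum>b<i. (-1) ^ (i - Suc b) * real (i choose Suc b) * f (Suc b))"
  proof -
    have "(\<Sum>b\<le>i. (-1) ^ (i - b) * real (i choose Suc b) * f (Suc b))
        = (\<Sum>b<i. (-1) ^ (i - b) * real (i choose Suc b) * f (Suc b))"
      by (simp add: lessThan_Suc_atMost[symmetric])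
    also have "\<dots> = (\<Sum>b<i. - ((-1) ^ (i - Suc b) * real (i choose Suc b) * f (Suc b)))"
    proof (rule sum.cong)
      fix b assume "b \<in> {..<i}"
      then have "i - b = Suc (i - Suc b)" by auto
      then show "(-1) ^ (i - b) * real (i choose Suc b) * f (Suc b) = - ((-1) ^ (i - Suc b) * real (i choose Suc b) * f (Suc b))"
        by simp
    qed simp
    finally show ?thesis by (simp add: sum_negf)
  qed
  show ?thesis using A B C unfolding dd_def[of "\<lambda>a. f (Suc a)"] by simp
qed

lemma dd_linear: "dd (\<lambda>a. c * f a + e * g a) i = c * dd f i + e * dd g i"
  by (simp add: dd_def sum.distrib sum_distrib_left algebra_simps)

lemma dd_sum: "finite A \<Longrightarrow> dd (\<lambda>a. \<Sum>p\<in>A. f p a) i = (\<Sum>p\<in>A. dd (f p) i)"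
  unfolding dd_def by (simp add: sum_distrib_left sum_distrib_right sum.swap[of _ A] algebra_simps)

lemma dd_diff: "dd (\<lambda>a. f a - g a) i = dd f i - dd g i"
  by (simp add: dd_def sum_subtractf algebra_simps)

lemma dd_Suc': "dd f (Suc i) = dd (\<lambda>a. f (Suc a) - f a) i"
  by (simp add: dd_Suc dd_diff)

lemma dd_psum: "dd (\<lambda>a. \<Sum>s<a. f s) (Suc i) = dd f i"
  by (simp add: dd_Suc')

lemma dd_psum0: "dd (\<lambda>a. \<Sum>s<a. f s) 0 = 0"
  by simp

lemma dd_binom: "dd (\<lambda>a. real ((a + p) choose m)) i = (if i \<le> m then real (p choose (m - i)) else 0)"
proof (induction i arbitrary: m)
  case 0 then show ?case by simp
next
  case (Suc i)
  show ?case
  proof (cases m)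
    case 0
    have "dd (\<lambda>a. real ((a + p) choose m)) (Suc i) = dd (\<lambda>a. 0) i"
      unfolding dd_Suc' using 0 by simp
    also have "\<dots> = 0" by (simp add: dd_def)
    finally show ?thesis using 0 by simp
  next
    case (Suc m')
    have "dd (\<lambda>a. real ((a + p) choose m)) (Suc i) = dd (\<lambda>a. real ((a + p) choose m')) i"
      unfolding dd_Suc' using Suc by simp
    then show ?thesis using Suc.IH[of m'] Suc by simp
  qed
qed

(* ---- part N2 ---- *)
definition nc :: "(nat \<Rightarrow> nat \<Rightarrow> real) \<Rightarrow> nat \<Rightarrow> nat \<Rightarrow> real" where
  "nc f i j = (\<Sum>a\<le>i. \<Sum>b\<le>j.
      (-1) ^ (i - a + (j - b)) * real (i choose a) * real (j choose b) * f a b)"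

lemma nc_dd: "nc f i j = dd (\<lambda>a. dd (\<lambda>b. f a b) j) i"
  unfolding nc_def dd_def sum_distrib_left
  by (intro sum.cong refl) (simp only: power_add mult_ac)

lemma dd_cmult1: "dd (\<lambda>a. c * f a) i = c * dd f i"
  unfolding dd_def sum_distrib_left by (simp add: mult_ac)

lemma dd_cmult2: "dd (\<lambda>a. f a * c) i = dd f i * c"
  unfolding dd_def sum_distrib_right by (simp add: mult_ac)

lemma nc_sep: "nc (\<lambda>a b. f a * g b) i j = dd f i * dd g j"
  unfolding nc_dd by (simp add: dd_cmult1 dd_cmult2)

lemma nc_add3: "nc (\<lambda>a b. f a b + g a b + h a b) i j = nc f i j + nc g i j + nc h i j"
  unfolding nc_def by (simp add: sum.distrib algebra_simps)

lemma nc_sum: "finite A \<Longrightarrow> nc (\<lambda>a b. \<Sum>p\<in>A. f p a b) i j = (\<Sum>p\<in>A. nc (f p) i j)"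
  unfolding nc_dd by (simp add: dd_sum)

lemma nc_psum1: "nc (\<lambda>a b. \<Sum>s<a. h s b) i j = (if i = 0 then 0 else nc h (i - 1) j)"
proof -
  have "nc (\<lambda>a b. \<Sum>s<a. h s b) i j = dd (\<lambda>a. \<Sum>s<a. dd (\<lambda>b. h s b) j) i"
    unfolding nc_dd by (simp add: dd_sum)
  then show ?thesis
    by (cases i) (simp_all add: dd_psum nc_dd)
qed

lemma nc_psum2: "nc (\<lambda>a b. \<Sum>v<b. h a v) i j = (if j = 0 then 0 else nc h i (j - 1))"
proof -
  have "nc (\<lambda>a b. \<Sum>v<b. h a v) i j = dd (\<lambda>a. if j = 0 then 0 else dd (h a) (j - 1)) i"
    unfolding nc_dd by (cases j) (simp_all add: dd_psum)
  then show ?thesis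
    by (cases j) (simp_all add: nc_dd dd_def)
qed

(* ---- part N3 ---- *)
definition HH :: "(nat \<Rightarrow> nat \<Rightarrow> real) \<Rightarrow> nat \<Rightarrow> real \<Rightarrow> real \<Rightarrow> real" where
  "HH c k X Y = (\<Sum>i\<le>k. c i (k - i) * X ^ i * Y ^ (k - i))"

locale crec =
  fixes c g :: "nat \<Rightarrow> nat \<Rightarrow> real" and n :: nat
  assumes rec: "\<And>i j. g i j = c i j + (if i = 0 then 0 else c (i - 1) j) + (if j = 0 then 0 else c i (j - 1))"
begin

lemma HH_rec0: "HH g 0 X Y = HH c 0 X Y"
  by (simp add: HH_def rec)

lemma HH_recS: "HH g (Suc k) X Y = HH c (Suc k) X Y + (X + Y) * HH c k X Y"
proof -
  have "HH g (Suc k) X Y = HH c (Suc k) X Y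
     + (\<Sum>i\<le>Suc k. (if i = 0 then 0 else c (i - 1) (Suc k - i)) * X ^ i * Y ^ (Suc k - i))
     + (\<Sum>i\<le>Suc k. (if Suc k - i = 0 then 0 else c i (Suc k - i - 1)) * X ^ i * Y ^ (Suc k - i))"
    unfolding HH_def rec by (simp add: sum.distrib algebra_simps)
  also have "(\<Sum>i\<le>Suc k. (if i = 0 then 0 else c (i - 1) (Suc k - i)) * X ^ i * Y ^ (Suc k - i))
      = X * HH c k X Y"
    unfolding HH_def sum.atMost_Suc_shift by (simp add: sum_distrib_left algebra_simps)
  also have "(\<Sum>i\<le>Suc k. (if Suc k - i = 0 then 0 else c i (Suc k - i - 1)) * X ^ i * Y ^ (Suc k - i))
      = Y * HH c k X Y"
  proof -
    have "(\<Sum>i\<le>Suc k. (if Suc k - i = 0 then 0 else c i (Suc k - i - 1)) * X ^ i * Y ^ (Suc k - i))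
       = (\<Sum>i\<le>k. c i (k - i) * X ^ i * Y ^ (Suc (k - i)))"
      by (simp add: Suc_diff_le)
    also have "\<dots> = Y * HH c k X Y"
      unfolding HH_def by (simp add: sum_distrib_left algebra_simps)
    finally show ?thesis .
  qed
  finally show ?thesis by (simp add: algebra_simps)
qed

lemma HH_closed: "HH c k X Y = (\<Sum>l\<le>k. (-(X + Y)) ^ (k - l) * HH g l X Y)"
proof (induction k)
  case 0 then show ?case by (simp add: HH_rec0)
next
  case (Suc k)
  have "HH c (Suc k) X Y = HH g (Suc k) X Y + (-(X + Y)) * HH c k X Y"
    using HH_recS[of k X Y] by (simp add: algebra_simps)
  also have "\<dots> = HH g (Suc k) X Y + (\<Sum>l\<le>k. (-(X + Y)) ^ (Suc k - l) * HH g l X Y)"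
    unfolding Suc sum_distrib_left
    by (simp add: Suc_diff_le mult.assoc)
  also have "\<dots> = (\<Sum>l\<le>Suc k. (-(X + Y)) ^ (Suc k - l) * HH g l X Y)"
    by simp
  finally show ?case .
qed

lemma HH_scale: "HH f l (t * X) (t * Y) = t ^ l * HH f l X Y"
  unfolding HH_def sum_distrib_left
proof (intro sum.cong refl)
  fix i assume "i \<in> {..l}"
  then have "t ^ l = t ^ i * t ^ (l - i)" by (simp add: power_add[symmetric])
  then show "f i (l - i) * (t * X) ^ i * (t * Y) ^ (l - i) = t ^ l * (f i (l - i) * X ^ i * Y ^ (l - i))"
    by (simp add: power_mult_distrib)
qed

end

locale crec2 = crec +
  assumes gz: "\<And>i j. n < i + j \<Longrightarrow> g i j = 0"
  and line: "\<And>X Y. X + Y = -1 \<Longrightarrow> (\<Sum>i\<le>n. \<Sum>j\<le>n. g i j * X ^ i * Y ^ j) = 0"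
begin

lemma HHg_zero: "n < l \<Longrightarrow> HH g l X Y = 0"
  unfolding HH_def by (intro sum.neutral) (auto simp: gz)

lemma gz': "g a b \<noteq> 0 \<Longrightarrow> a + b \<le> n"
  using gz by force

lemma square_tri: "(\<Sum>i\<le>n. \<Sum>j\<le>n. g i j * X ^ i * Y ^ j) = (\<Sum>l\<le>n. HH g l X Y)"
proof -
  have "(\<Sum>i\<le>n. \<Sum>j\<le>n. g i j * X ^ i * Y ^ j) = (\<Sum>(i,j)\<in>{..n}\<times>{..n}. g i j * X ^ i * Y ^ j)"
    by (simp add: sum.cartesian_product)
  also have "\<dots> = (\<Sum>(i,j)\<in>{(i,j). i + j \<le> n}. g i j * X ^ i * Y ^ j)"
    by (rule sum.mono_neutral_right) (auto simp: gz')
  also have "\<dots> = (\<Sum>l\<le>n. HH g l X Y)"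
    unfolding HH_def by (rule sum.triangle_reindex_eq)
  finally show ?thesis .
qed

definition ZZ where "ZZ X Y = (\<Sum>l\<le>n. (-(X + Y)) ^ (n - l) * HH g l X Y)"

lemma HHc_big: "n \<le> k \<Longrightarrow> HH c k X Y = (-(X + Y)) ^ (k - n) * ZZ X Y"
proof -
  assume k: "n \<le> k"
  have "HH c k X Y = (\<Sum>l\<le>n. (-(X + Y)) ^ (k - l) * HH g l X Y)"
    unfolding HH_closed
    by (rule sum.mono_neutral_right) (use k in \<open>auto simp: HHg_zero\<close>)
  also have "\<dots> = (\<Sum>l\<le>n. (-(X + Y)) ^ (k - n) * ((-(X + Y)) ^ (n - l) * HH g l X Y))"
  proof (intro sum.cong refl)
    fix l assume "l \<in> {..n}"
    then have "k - l = (k - n) + (n - l)" using k by auto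
    then show "(-(X + Y)) ^ (k - l) * HH g l X Y = (-(X + Y)) ^ (k - n) * ((-(X + Y)) ^ (n - l) * HH g l X Y)"
      by (simp add: power_add)
  qed
  finally show ?thesis unfolding ZZ_def by (simp add: sum_distrib_left)
qed

lemma ZZ_zero: "X + Y \<noteq> 0 \<Longrightarrow> ZZ X Y = 0"
proof -
  assume nz: "X + Y \<noteq> 0"
  define t where "t = - 1 / (X + Y)"
  have t1: "t * (-(X + Y)) = 1" using nz by (simp add: t_def field_simps)
  have tnz: "t \<noteq> 0" using nz by (simp add: t_def)
  have "t ^ n * ZZ X Y = (\<Sum>l\<le>n. t ^ l * HH g l X Y)"
    unfolding ZZ_def sum_distrib_left
  proof (intro sum.cong refl)
    fix l assume "l \<in> {..n}"
    then have "t ^ n = t ^ l * t ^ (n - l)" by (simp add: power_add[symmetric])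
    then have "t ^ n * ((-(X + Y)) ^ (n - l) * HH g l X Y) = t ^ l * (t * (-(X + Y))) ^ (n - l) * HH g l X Y"
      by (simp add: power_mult_distrib)
    then show "t ^ n * ((-(X + Y)) ^ (n - l) * HH g l X Y) = t ^ l * HH g l X Y"
      using t1 by simp
  qed
  also have "\<dots> = (\<Sum>l\<le>n. HH g l (t * X) (t * Y))"
    by (simp add: HH_scale)
  also have "\<dots> = 0"
    using line[of "t * X" "t * Y"] square_tri[of "t * X" "t * Y"] t1
    by (simp add: algebra_simps)
  finally show ?thesis using tnz by simp
qed

lemma c_zero: "n \<le> i + j \<Longrightarrow> c i j = 0"
proof -
  assume ij: "n \<le> i + j"
  define k where "k = i + j"
  define p where "p = (\<Sum>a\<le>k. monom (c a (k - a)) a)"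
  have "poly p X = HH c k X 1" for X
    unfolding p_def HH_def by (simp add: poly_sum poly_monom)
  then have roots: "{X. X \<noteq> -1} \<subseteq> {X. poly p X = 0}"
    using HHc_big[of k] ZZ_zero ij k_def by auto
  have "infinite {X::real. X \<noteq> -1}"
  proof
    assume "finite {X::real. X \<noteq> -1}"
    then have "finite ({X::real. X \<noteq> -1} \<union> {-1})" by simp
    moreover have "{X::real. X \<noteq> -1} \<union> {-1} = UNIV" by auto
    ultimately show False using infinite_UNIV_char_0 by metis
  qed
  then have "p = 0" using roots poly_roots_finite finite_subset by blast
  then have "coeff p i = 0" by simp
  moreover have "coeff p i = c i j"
    unfolding p_def by (simp add: coeff_sum coeff_monom k_def)
  ultimately show ?thesis by simp
qed

lemma final_poly:
  assumes "0 < n"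
  shows "(\<Sum>i<n. \<Sum>j<n. c i j * X ^ i * Y ^ j) * (1 + X + Y) = (\<Sum>i\<le>n. \<Sum>j\<le>n. g i j * X ^ i * Y ^ j)"
proof -
  obtain n' where n': "n = Suc n'" using assms by (cases n) auto
  define S where "S = (\<Sum>i\<le>n. \<Sum>j\<le>n. c i j * X ^ i * Y ^ j)"
  have S1: "(\<Sum>i<n. \<Sum>j<n. c i j * X ^ i * Y ^ j) = S"
    unfolding S_def n' lessThan_Suc_atMost[symmetric]
    by (simp add: c_zero n')
  have S2: "(\<Sum>i\<le>n. \<Sum>j\<le>n. (if i = 0 then 0 else c (i - 1) j) * X ^ i * Y ^ j) = X * S"
  proof -
    have "(\<Sum>i\<le>n. \<Sum>j\<le>n. (if i = 0 then 0 else c (i - 1) j) * X ^ i * Y ^ j)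
       = (\<Sum>i\<le>n'. \<Sum>j\<le>n. c i j * X ^ Suc i * Y ^ j)"
      unfolding n' sum.atMost_Suc_shift by simp
    also have "\<dots> = X * (\<Sum>i\<le>n'. \<Sum>j\<le>n. c i j * X ^ i * Y ^ j)"
      by (simp add: sum_distrib_left algebra_simps)
    also have "(\<Sum>i\<le>n'. \<Sum>j\<le>n. c i j * X ^ i * Y ^ j) = S"
      unfolding S_def n' by (simp add: c_zero[of "Suc n'"] n')
    finally show ?thesis .
  qed
  have S3: "(\<Sum>i\<le>n. \<Sum>j\<le>n. (if j = 0 then 0 else c i (j - 1)) * X ^ i * Y ^ j) = Y * S"
  proof -
    have "(\<Sum>i\<le>n. \<Sum>j\<le>n. (if j = 0 then 0 else c i (j - 1)) * X ^ i * Y ^ j)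
       = (\<Sum>i\<le>n. \<Sum>j\<le>n'. c i j * X ^ i * Y ^ Suc j)"
      unfolding n' sum.atMost_Suc_shift by simp
    also have "\<dots> = Y * (\<Sum>i\<le>n. \<Sum>j\<le>n'. c i j * X ^ i * Y ^ j)"
      by (simp add: sum_distrib_left algebra_simps)
    also have "(\<Sum>i\<le>n. \<Sum>j\<le>n'. c i j * X ^ i * Y ^ j) = S"
      unfolding S_def n' by (simp add: c_zero n')
    finally show ?thesis .
  qed
  have "(\<Sum>i\<le>n. \<Sum>j\<le>n. g i j * X ^ i * Y ^ j) = S
      + (\<Sum>i\<le>n. \<Sum>j\<le>n. (if i = 0 then 0 else c (i - 1) j) * X ^ i * Y ^ j)
      + (\<Sum>i\<le>n. \<Sum>j\<le>n. (if j = 0 then 0 else c i (j - 1)) * X ^ i * Y ^ j)"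
    unfolding S_def rec by (simp add: sum.distrib algebra_simps)
  then show ?thesis using S1 S2 S3 by (simp add: algebra_simps)
qed

end

(* ---- part C1 ---- *)
lemma fin_funs: "finite B \<Longrightarrow> finite {f::'n::finite \<Rightarrow> 'b. \<forall>x. f x \<in> B}"
  using finite_set_of_finite_funs[of "UNIV::'n set" B undefined] by simp

definition NN :: "'n::finite set \<Rightarrow> nat \<Rightarrow> ('n \<Rightarrow> nat) set" where
  "NN A N = {f. (\<forall>i. i \<notin> A \<longrightarrow> f i = 0) \<and> sum f A = N}"

lemma NN_finite: "finite (NN A N)"
proof -
  have "NN A N \<subseteq> {f. \<forall>x. f x \<in> {..N}}"
  proof
    fix f assume f: "f \<in> NN A N"
    have "f x \<le> N" for x
    proof (cases "x \<in> A")
      case True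
      then have "f x \<le> sum f A" by (intro member_le_sum) auto
      then show ?thesis using f by (simp add: NN_def)
    next
      case False then show ?thesis using f by (simp add: NN_def)
    qed
    then show "f \<in> {f. \<forall>x. f x \<in> {..N}}" by simp
  qed
  then show ?thesis using fin_funs[of "{..N}"] finite_subset by blast
qed

lemma NN_insert:
  assumes "e \<notin> A"
  shows "NN (insert e A) N = (\<Union>j\<in>{..N}. (\<lambda>f. f(e := N - j)) ` NN A j)"
proof (intro equalityI subsetI)
  fix f assume f: "f \<in> NN (insert e A) N"
  have fin: "finite A" by simp
  have s: "sum f (insert e A) = f e + sum f A" using assms fin by simp
  have sA: "sum (f(e := 0)) A = sum f A" using assms by (intro sum.cong) auto
  have "f(e := 0) \<in> NN A (sum f A)" using f assms sA by (auto simp: NN_def)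
  moreover have "f = (f(e := 0))(e := N - sum f A)"
  proof -
    have "f e + sum f A = N" using f s by (simp add: NN_def)
    then have fe: "f e = N - sum f A" by simp
    show ?thesis by (simp add: fe[symmetric])
  qed
  moreover have "sum f A \<le> N" using f s by (simp add: NN_def)
  ultimately show "f \<in> (\<Union>j\<in>{..N}. (\<lambda>f. f(e := N - j)) ` NN A j)" by blast
next
  fix f assume "f \<in> (\<Union>j\<in>{..N}. (\<lambda>f. f(e := N - j)) ` NN A j)"
  then obtain j g where j: "j \<le> N" and g: "g \<in> NN A j" and fg: "f = g(e := N - j)" by auto
  have sA: "sum f A = sum g A" using assms fg by (intro sum.cong) auto
  have "sum f (insert e A) = f e + sum f A" using assms by simp
  then show "f \<in> NN (insert e A) N" using g j fg sA assms by (auto simp: NN_def)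
qed

lemma card_NN: fixes A :: "'n::finite set" shows "card (NN A N) = (N + card A - 1) choose N"
proof -
  have "finite A" by simp
  then show ?thesis
  proof (induction A arbitrary: N rule: finite_induct)
    case empty
    have "NN ({}::'n set) N = (if N = 0 then {\<lambda>_. 0} else {})" by (auto simp: NN_def)
    then show ?case by (cases N) (simp_all del: NN_def)
  next
    case (insert e A)
    have "card (NN (insert e A) N) = (\<Sum>j\<le>N. card ((\<lambda>f. f(e := N - j)) ` NN A j))"
      unfolding NN_insert[OF insert(2)]
    proof (rule card_UN_disjoint)
      show "\<forall>i\<in>{..N}. finite ((\<lambda>f. f(e := N - i)) ` NN A i)" using NN_finite by blast
      show "\<forall>i\<in>{..N}. \<forall>j\<in>{..N}. i \<noteq> j \<longrightarrow>
          (\<lambda>f. f(e := N - i)) ` NN A i \<inter> (\<lambda>f. f(e := N - j)) ` NN A j = {}"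
      proof (intro ballI impI)
        fix i j assume "i \<in> {..N}" "j \<in> {..N}" "i \<noteq> j"
        then have "N - i \<noteq> N - j" by auto
        then show "(\<lambda>f. f(e := N - i)) ` NN A i \<inter> (\<lambda>f. f(e := N - j)) ` NN A j = {}"
          by (auto dest: fun_cong[of _ _ e])
      qed
    qed simp
    also have "\<dots> = (\<Sum>j\<le>N. card (NN A j))"
    proof (intro sum.cong refl card_image inj_onI)
      fix j f g assume "f \<in> NN A j" "g \<in> NN A j" "f(e := N - j) = g(e := N - j)"
      then have fe: "f e = 0" "g e = 0" using insert(2) unfolding NN_def by auto
      show "f = g"
      proof
        fix i show "f i = g i"
        proof (cases "i = e")
          case True then show ?thesis using fe by simp
        next
          case False then show ?thesis using fun_cong[OF \<open>f(e := N - j) = g(e := N - j)\<close>, of i] by simp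
        qed
      qed
    qed
    also have "\<dots> = (\<Sum>j\<le>N. (j + card A - 1) choose j)" using insert by simp
    also have "\<dots> = (N + card (insert e A) - 1) choose N"
    proof (cases "A = {}")
      case True
      have "(\<Sum>j\<le>N. (j + card A - 1) choose j) = (\<Sum>j\<le>N. if j = 0 then 1 else 0)"
        using True by (intro sum.cong refl) auto
      also have "\<dots> = 1" by (simp add: sum.delta)
      finally show ?thesis using True by simp
    next
      case False
      then have "card A \<ge> 1" using insert(1) by (simp add: Suc_le_eq card_gt_0_iff)
      then obtain a where a: "card A = Suc a" by (cases "card A") auto
      have "(\<Sum>j\<le>N. (j + card A - 1) choose j) = (\<Sum>j\<le>N. (a + j) choose j)"
        using a by (intro sum.cong refl) (simp add: add.commute)
      also have "\<dots> = Suc (a + N) choose N" by (rule sum_choose_lower)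
      finally show ?thesis using a insert by (simp add: add.commute)
    qed
    finally show ?case .
  qed
qed

(* ---- part C2 ---- *)
definition phi :: "(int \<Rightarrow> real) \<Rightarrow> (int \<Rightarrow> real) \<Rightarrow> int \<Rightarrow> nat \<Rightarrow> real" where
  "phi A B T U = (\<Sum>j\<le>U. A (int j) * B (int j + T - int U))"

lemma phi_neg: "(\<And>x. x < 0 \<Longrightarrow> B x = 0) \<Longrightarrow> T < 0 \<Longrightarrow> phi A B T U = 0"
  unfolding phi_def by (intro sum.neutral) auto

lemma phi_Suc: "phi A B T (Suc U) = A (int (Suc U)) * B T + phi A B (T - 1) U"
  unfolding phi_def by (simp add: algebra_simps)

lemma phi_core:
  assumes B: "\<And>x. x < 0 \<Longrightarrow> B x = 0"
  shows "phi A B (int Tn) U + (\<Sum>T'<Tn. phi A B (int T') U) + (\<Sum>U'<U. phi A B (int Tn) U')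
       = (\<Sum>j\<le>U. A (int j)) * (\<Sum>l\<le>Tn. B (int l))"
proof (induction U)
  case 0
  have "phi A B (int Tn) 0 + (\<Sum>T'<Tn. phi A B (int T') 0) = A 0 * (\<Sum>l\<le>Tn. B (int l))"
    unfolding phi_def by (simp add: lessThan_Suc_atMost[symmetric] sum_distrib_left algebra_simps)
  then show ?case by simp
next
  case (Suc U)
  have tel: "(\<Sum>T'<Tn. phi A B (int T' - 1) U) = (\<Sum>T'<Tn. phi A B (int T') U) - phi A B (int Tn - 1) U"
  proof -
    have "(\<Sum>k<Tn. phi A B (int (Suc k) - 1) U - phi A B (int k - 1) U) = phi A B (int Tn - 1) U - phi A B (int 0 - 1) U"
      by (rule sum_lessThan_telescope)
    moreover have "phi A B (int 0 - 1) U = 0" using B by (intro phi_neg) auto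
    ultimately show ?thesis by (simp add: sum_subtractf)
  qed
  have "phi A B (int Tn) (Suc U) + (\<Sum>T'<Tn. phi A B (int T') (Suc U)) + (\<Sum>U'<Suc U. phi A B (int Tn) U')
      = A (int (Suc U)) * B (int Tn) + phi A B (int Tn - 1) U
        + (A (int (Suc U)) * (\<Sum>T'<Tn. B (int T')) + (\<Sum>T'<Tn. phi A B (int T' - 1) U))
        + ((\<Sum>U'<U. phi A B (int Tn) U') + phi A B (int Tn) U)"
    by (simp add: phi_Suc sum.distrib sum_distrib_left)
  also have "\<dots> = A (int (Suc U)) * (\<Sum>l\<le>Tn. B (int l))
       + (phi A B (int Tn) U + (\<Sum>T'<Tn. phi A B (int T') U) + (\<Sum>U'<U. phi A B (int Tn) U'))"
    unfolding tel by (simp add: lessThan_Suc_atMost[symmetric] algebra_simps)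
  also have "\<dots> = (\<Sum>j\<le>Suc U. A (int j)) * (\<Sum>l\<le>Tn. B (int l))"
    unfolding Suc by (simp add: algebra_simps)
  finally show ?case .
qed

lemma phi_offset:
  fixes t u c nu :: nat and A B :: "int \<Rightarrow> real"
  assumes B: "\<And>x. x < 0 \<Longrightarrow> B x = 0"
  defines "F \<equiv> \<lambda>s v. if v < nu then 0 else phi A B (int s - int c) (v - nu)"
  shows "F t u + (\<Sum>s<t. F s u) + (\<Sum>v<u. F t v)
       = (if u < nu \<or> t < c then 0 else (\<Sum>j\<le>u - nu. A (int j)) * (\<Sum>l\<le>t - c. B (int l)))"
proof (cases "u < nu \<or> t < c")
  case True
  show ?thesis
  proof (cases "u < nu")
    case True then show ?thesis by (simp add: F_def)
  next
    case False
    then have tc: "t < c" using \<open>u < nu \<or> t < c\<close> by simp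
    have z: "F s v = 0" if "s \<le> t" for s v
      unfolding F_def using phi_neg[OF B] that tc by auto
    then show ?thesis using tc by simp
  qed
next
  case False
  then have un: "nu \<le> u" and tc: "c \<le> t" by auto
  have 1: "F t u = phi A B (int (t - c)) (u - nu)" using un tc by (simp add: F_def of_nat_diff)
  have 2: "(\<Sum>s<t. F s u) = (\<Sum>T'<t - c. phi A B (int T') (u - nu))"
  proof -
    have e: "{..<t} = {..<c} \<union> {c..<t}" using tc by auto
    have "(\<Sum>s<t. F s u) = (\<Sum>s\<in>{..<c} \<union> {c..<t}. F s u)" by (simp only: e)
    also have "\<dots> = (\<Sum>s<c. F s u) + (\<Sum>s\<in>{c..<t}. F s u)"
      by (rule sum.union_disjoint) auto
    also have "(\<Sum>s<c. F s u) = 0"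
      unfolding F_def using phi_neg[OF B] by (intro sum.neutral) auto
    also have "(\<Sum>s\<in>{c..<t}. F s u) = (\<Sum>s\<in>{0 + c..<(t - c) + c}. F s u)" using tc by simp
    also have "\<dots> = (\<Sum>s\<in>{0..<t - c}. F (s + c) u)" by (rule sum.shift_bounds_nat_ivl)
    also have "\<dots> = (\<Sum>T'<t - c. phi A B (int T') (u - nu))"
      using un by (simp add: F_def atLeast0LessThan)
    finally show ?thesis by simp
  qed
  have 3: "(\<Sum>v<u. F t v) = (\<Sum>U'<u - nu. phi A B (int (t - c)) U')"
  proof -
    have e: "{..<u} = {..<nu} \<union> {nu..<u}" using un by auto
    have "(\<Sum>v<u. F t v) = (\<Sum>v\<in>{..<nu} \<union> {nu..<u}. F t v)" by (simp only: e)
    also have "\<dots> = (\<Sum>v<nu. F t v) + (\<Sum>v\<in>{nu..<u}. F t v)"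
      by (rule sum.union_disjoint) auto
    also have "(\<Sum>v<nu. F t v) = 0"
      unfolding F_def by (intro sum.neutral) auto
    also have "(\<Sum>v\<in>{nu..<u}. F t v) = (\<Sum>v\<in>{0 + nu..<(u - nu) + nu}. F t v)" using un by simp
    also have "\<dots> = (\<Sum>v\<in>{0..<u - nu}. F t (v + nu))" by (rule sum.shift_bounds_nat_ivl)
    also have "\<dots> = (\<Sum>U'<u - nu. phi A B (int (t - c)) U')"
      using tc by (simp add: F_def atLeast0LessThan of_nat_diff)
    finally show ?thesis by simp
  qed
  show ?thesis unfolding 1 2 3 using phi_core[OF B, where Tn = "t - c" and U = "u - nu" and A = A] False by simp
qed

definition kap :: "nat \<Rightarrow> int \<Rightarrow> real" where
  "kap a x = (if x < 0 then 0 else real ((nat x + a - 1) choose nat x))"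

lemma kap_neg: "x < 0 \<Longrightarrow> kap a x = 0" by (simp add: kap_def)

lemma kap_sum: "(\<Sum>j\<le>U. kap a (int j)) = real ((U + a) choose a)"
proof (cases a)
  case 0
  have "(\<Sum>j\<le>U. kap a (int j)) = (\<Sum>j\<le>U. if j = 0 then 1 else 0)"
    using 0 by (intro sum.cong refl) (auto simp: kap_def)
  also have "\<dots> = 1" by (simp add: sum.delta)
  finally show ?thesis using 0 by simp
next
  case (Suc b)
  have "(\<Sum>j\<le>U. kap a (int j)) = real (\<Sum>j\<le>U. (b + j) choose j)"
    using Suc by (simp add: kap_def add.commute)
  also have "\<dots> = real (Suc (b + U) choose U)" by (simp only: sum_choose_lower)
  also have "Suc (b + U) choose U = (U + a) choose a"
    using Suc binomial_symmetric[of U "U + a"] by (simp add: add.commute)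
  finally show ?thesis .
qed

(* ---- part F1 ---- *)
lemma poly1:
  fixes X :: real
  assumes cm: "c \<le> m" and mn: "m \<le> n"
  shows "(\<Sum>i\<le>n. (if i \<le> m then real ((m - c) choose (m - i)) else 0) * X ^ i) = X ^ c * (1 + X) ^ (m - c)"
proof -
  have "(\<Sum>i\<le>n. (if i \<le> m then real ((m - c) choose (m - i)) else 0) * X ^ i)
      = (\<Sum>i\<le>m. real ((m - c) choose (m - i)) * X ^ i)"
    using mn by (intro sum.mono_neutral_cong_right) auto
  also have "\<dots> = (\<Sum>i<Suc m. real ((m - c) choose (m - i)) * X ^ i)"
    by (simp add: lessThan_Suc_atMost)
  also have "\<dots> = (\<Sum>l<Suc m. real ((m - c) choose l) * X ^ (m - l))"
    by (subst sum.nat_diff_reindex[symmetric]) simp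
  also have "\<dots> = (\<Sum>l\<le>m - c. real ((m - c) choose l) * X ^ (m - l))"
    by (intro sum.mono_neutral_cong_right) auto
  also have "\<dots> = (\<Sum>l\<le>m - c. X ^ c * (real ((m - c) choose l) * 1 ^ l * X ^ (m - c - l)))"
  proof (intro sum.cong refl)
    fix l assume "l \<in> {..m - c}"
    then have "m - l = c + (m - c - l)" using cm by auto
    then show "real ((m - c) choose l) * X ^ (m - l) = X ^ c * (real ((m - c) choose l) * 1 ^ l * X ^ (m - c - l))"
      by (simp add: power_add)
  qed
  also have "\<dots> = X ^ c * (1 + X) ^ (m - c)"
    by (simp add: binomial_ring[of 1 X "m - c"] sum_distrib_left)
  finally show ?thesis .
qed

lemma alt_sum: "(\<Sum>P\<in>(UNIV :: 'n::finite set set). (-1::real) ^ card P) = 0"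
proof -
  have h: "(\<Prod>x\<in>(UNIV::'n set). (1::real) - 1) = (\<Sum>X\<in>Pow (UNIV::'n set). (-1) ^ card X * (\<Prod>x\<in>X. 1) * (\<Prod>x\<in>UNIV-X. 1))"
    by (rule prod_diff_conv_sum) simp
  have "card (UNIV::'n set) > 0" by (simp add: card_gt_0_iff)
  then have "(\<Prod>x\<in>(UNIV::'n set). (1::real) - 1) = 0" by simp
  with h show ?thesis by simp
qed

(* ---- part F2 ---- *)
lemma line_term:
  fixes X Y :: real
  assumes XY: "X + Y = -1" and i: "p \<le> k" "c \<le> m" "c + p = R" "k + m = n"
  shows "X ^ c * (1 + X) ^ (m - c) * (Y ^ (k - p) * (1 + Y) ^ p) = (-1) ^ (n - R) * X ^ R * Y ^ (n - R) * (-1) ^ k"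
proof -
  have X1: "1 + X = - Y" and Y1: "1 + Y = - X" using XY by auto
  have e2: "(m - c) + (k - p) = n - R" using i by simp
  have e3: "(m - c + p) + k = (n - R) + 2 * p" using i by simp
  have s0: "(-1::real) ^ (m - c + p) * (-1) ^ k = (-1) ^ (n - R)"
  proof -
    have "(-1::real) ^ (m - c + p) * (-1) ^ k = (-1) ^ ((m - c + p) + k)" by (simp only: power_add)
    also have "\<dots> = (-1) ^ ((n - R) + 2 * p)" by (simp only: e3)
    also have "\<dots> = (-1) ^ (n - R)" by (simp add: power_add power_mult)
    finally show ?thesis .
  qed
  have kk: "(-1::real) ^ k * (-1) ^ k = 1"
    by (metis power_add[symmetric] power_mult[symmetric] mult_2[symmetric] power_minus1_even)
  have sgn: "(-1::real) ^ (m - c + p) = (-1) ^ (n - R) * (-1) ^ k"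
  proof -
    have "(-1::real) ^ (m - c + p) = (-1) ^ (m - c + p) * ((-1) ^ k * (-1) ^ k)" using kk by simp
    also have "\<dots> = ((-1) ^ (m - c + p) * (-1) ^ k) * (-1) ^ k" by (simp only: mult.assoc)
    finally show ?thesis using s0 by simp
  qed
  have "X ^ c * (1 + X) ^ (m - c) * (Y ^ (k - p) * (1 + Y) ^ p)
      = ((-1) ^ (m - c) * (-1) ^ p) * (X ^ c * X ^ p) * (Y ^ (m - c) * Y ^ (k - p))"
  proof -
    have pm: "(- Y) ^ a = (-1) ^ a * Y ^ a" "(- X) ^ a = (-1) ^ a * X ^ a" for a by (rule power_minus)+
    show ?thesis unfolding X1 Y1 pm by (simp only: mult_ac)
  qed
  also have "\<dots> = (-1) ^ (m - c + p) * X ^ R * Y ^ (n - R)"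
    by (simp only: power_add[symmetric] e2 i(3))
  also have "\<dots> = (-1) ^ (n - R) * X ^ R * Y ^ (n - R) * (-1) ^ k"
    unfolding sgn by (simp only: mult_ac)
  finally show ?thesis .
qed

(* ---- part M1 ---- *)
context
  fixes r :: "'n::finite set \<Rightarrow> nat"
  assumes mr: "matroid_rank r"
begin

lemma r_card: "r S \<le> card S" using mr by (simp add: matroid_rank_def)
lemma r_mono: "S \<subseteq> T \<Longrightarrow> r S \<le> r T" using mr by (simp add: matroid_rank_def)
lemma r_sub: "r (S \<union> T) + r (S \<inter> T) \<le> r S + r T" using mr by (simp add: matroid_rank_def)

lemma r_empty: "r {} = 0" using r_card[of "{}"] by simp

lemma r_insert: "r (insert e S) \<le> Suc (r S)"
proof -
  have "r (S \<union> {e}) + r (S \<inter> {e}) \<le> r S + r {e}" by (rule r_sub)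
  moreover have "r {e} \<le> 1" using r_card[of "{e}"] by simp
  ultimately show ?thesis by simp
qed

lemma indep_subset:
  assumes I: "r I = card I" and JI: "J \<subseteq> I"
  shows "r J = card J"
proof -
  have "r (J \<union> (I - J)) + r (J \<inter> (I - J)) \<le> r J + r (I - J)" by (rule r_sub)
  moreover have "J \<union> (I - J) = I" using JI by auto
  moreover have "J \<inter> (I - J) = {}" by auto
  moreover have "r (I - J) \<le> card (I - J)" by (rule r_card)
  moreover have "card I = card J + card (I - J)"
    using JI by (simp add: card_Diff_subset card_mono)
  ultimately have "card J \<le> r J" using I r_empty by simp
  then show ?thesis using r_card[of J] by simp
qed

lemma indep_ext:
  fixes T :: "'n set"
  assumes I: "r I = card I" and IS: "I \<subseteq> S" and rI: "r I = r S"
  shows "\<exists>J. I \<subseteq> J \<and> J \<subseteq> S \<union> T \<and> r J = card J \<and> r J = r (S \<union> T)"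
proof -
  have "finite T" by simp
  then show ?thesis
  proof (induction T rule: finite_induct)
    case empty
    then show ?case using I IS rI by auto
  next
    case (insert e T)
    then obtain J where J: "I \<subseteq> J" "J \<subseteq> S \<union> T" "r J = card J" "r J = r (S \<union> T)" by blast
    show ?case
    proof (cases "r (S \<union> insert e T) = r (S \<union> T)")
      case True
      then show ?thesis using J by auto
    next
      case False
      have eq: "S \<union> insert e T = insert e (S \<union> T)" by auto
      have ge: "r (S \<union> T) \<le> r (S \<union> insert e T)" by (rule r_mono) auto
      have le: "r (S \<union> insert e T) \<le> Suc (r (S \<union> T))" unfolding eq by (rule r_insert)
      have up: "r (S \<union> insert e T) = Suc (r (S \<union> T))" using False ge le by simp
      have eJ: "e \<notin> J"
      proof
        assume "e \<in> J"
        then have "e \<in> S \<union> T" using J by auto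
        then have "S \<union> insert e T = S \<union> T" by auto
        then show False using False by simp
      qed
      have "r (insert e J \<union> (S \<union> T)) + r (insert e J \<inter> (S \<union> T)) \<le> r (insert e J) + r (S \<union> T)"
        by (rule r_sub)
      moreover have "insert e J \<union> (S \<union> T) = S \<union> insert e T" using J by auto
      moreover have "insert e J \<inter> (S \<union> T) = J"
      proof -
        have "e \<notin> S \<union> T" using False by (metis Un_insert_right insert_absorb)
        then show ?thesis using J by auto
      qed
      ultimately have "Suc (card J) \<le> r (insert e J)" using up J by simp
      moreover have "r (insert e J) \<le> card (insert e J)" by (rule r_card)
      ultimately have rr: "r (insert e J) = card (insert e J)" using eJ by simp
      have "r (insert e J) = r (S \<union> insert e T)" using rr eJ up J by simp
      then show ?thesis using rr J by (intro exI[of _ "insert e J"]) auto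
    qed
  qed
qed

lemma basis_for:
  "\<exists>B. r B = card B \<and> card B = r UNIV \<and> r P \<le> card (B \<inter> P)"
proof -
  obtain I where I: "{} \<subseteq> I" "I \<subseteq> {} \<union> P" "r I = card I" "r I = r ({} \<union> P)"
    using indep_ext[of "{}" "{}" P] r_empty by auto
  obtain B where B: "I \<subseteq> B" "B \<subseteq> P \<union> UNIV" "r B = card B" "r B = r (P \<union> UNIV)"
    using indep_ext[of I P UNIV] I by auto
  have "card I \<le> card (B \<inter> P)" using I B by (intro card_mono) auto
  then show ?thesis using B I by (intro exI[of _ B]) auto
qed

lemma r_compl: "r UNIV \<le> r P + card (- P)"
proof -
  have "r (P \<union> - P) + r (P \<inter> - P) \<le> r P + r (- P)" by (rule r_sub)
  then have "r UNIV \<le> r P + r (- P)" by (simp add: r_empty)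
  then show ?thesis using r_card[of "- P"] by simp
qed

end

(* ---- part G1 ---- *)
definition vecz :: "('n::finite \<Rightarrow> int) \<Rightarrow> real ^ 'n" where
  "vecz z = (\<chi> i. of_int (z i))"

lemma vecz_nth [simp]: "vecz z $ i = of_int (z i)" by (simp add: vecz_def)

lemma vecz_inj: "inj vecz"
  by (intro injI) (simp add: vec_eq_iff fun_eq_iff)

lemma vecz_int: "vecz z \<in> int_points" by (simp add: int_points_def)

definition Lz :: "('n::finite set \<Rightarrow> nat) \<Rightarrow> nat \<Rightarrow> nat \<Rightarrow> ('n \<Rightarrow> int) set" where
  "Lz r t u = {z. sum z UNIV = int (r UNIV) + int u - int t \<and>
      sum z {i. z i > 0} \<le> int (r {i. z i > 0}) + int u}"

definition Msum :: "('n::finite set \<Rightarrow> nat) \<Rightarrow> nat \<Rightarrow> nat \<Rightarrow> (real ^ 'n) set" where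
  "Msum r t u = {p + q + s | p q s. p \<in> base_polytope r \<and> q \<in> (*\<^sub>R) (real u) ` simplex_Delta
                        \<and> s \<in> (*\<^sub>R) (real t) ` simplex_Nabla}"

lemma QM_Msum: "QM r t u = card (int_points \<inter> Msum r t u)"
  by (simp add: QM_def Msum_def)

definition D1 :: "(real ^ 'n::finite) set" where
  "D1 = {v. (\<forall>i. v $ i \<ge> 0) \<and> (\<Sum>i\<in>UNIV. v $ i) = 1}"

lemma D1_convex: "convex D1"
  unfolding convex_def D1_def
  by (auto simp: sum.distrib sum_distrib_left[symmetric])

lemma Delta_D1: "simplex_Delta \<subseteq> D1"
  unfolding simplex_Delta_def
proof (rule hull_minimal)
  show "range (\<lambda>i. axis i 1) \<subseteq> (D1 :: (real ^ 'n) set)"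
  proof
    fix v :: "real ^ 'n" assume "v \<in> range (\<lambda>i. axis i 1)"
    then obtain k where k: "v = axis k 1" by auto
    have "(\<Sum>i\<in>UNIV. v $ i) = (\<Sum>i\<in>UNIV. if i = k then 1 else 0)"
      unfolding k axis_def by simp
    then show "v \<in> D1" unfolding D1_def k by (simp add: axis_def)
  qed
qed (rule D1_convex)

definition KB :: "('n::finite set \<Rightarrow> nat) \<Rightarrow> (real ^ 'n) set" where
  "KB r = {v. (\<Sum>i\<in>UNIV. v $ i) = real (r UNIV) \<and> (\<forall>S. (\<Sum>i\<in>S. v $ i) \<le> real (r S))}"

lemma KB_convex: "convex (KB r)"
  unfolding convex_def KB_def
proof (intro ballI allI impI CollectI conjI)
  fix x y :: "real ^ 'a" and u v :: real and S
  assume x: "x \<in> {v. (\<Sum>i\<in>UNIV. v $ i) = real (r UNIV) \<and> (\<forall>S. (\<Sum>i\<in>S. v $ i) \<le> real (r S))}"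
     and y: "y \<in> {v. (\<Sum>i\<in>UNIV. v $ i) = real (r UNIV) \<and> (\<forall>S. (\<Sum>i\<in>S. v $ i) \<le> real (r S))}"
     and uv: "0 \<le> u" "0 \<le> v" "u + v = 1"
  have "(\<Sum>i\<in>UNIV. (u *\<^sub>R x + v *\<^sub>R y) $ i) = u * (\<Sum>i\<in>UNIV. x $ i) + v * (\<Sum>i\<in>UNIV. y $ i)"
    by (simp add: sum.distrib sum_distrib_left)
  also have "\<dots> = real (r UNIV)" using x y uv by (simp add: distrib_right[symmetric])
  finally show "(\<Sum>i\<in>UNIV. (u *\<^sub>R x + v *\<^sub>R y) $ i) = real (r UNIV)" .
  have "(\<Sum>i\<in>S. (u *\<^sub>R x + v *\<^sub>R y) $ i) = u * (\<Sum>i\<in>S. x $ i) + v * (\<Sum>i\<in>S. y $ i)"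
    by (simp add: sum.distrib sum_distrib_left)
  also have "\<dots> \<le> u * real (r S) + v * real (r S)"
    using x y uv by (intro add_mono mult_left_mono) auto
  also have "\<dots> = real (r S)" using uv by (simp add: distrib_right[symmetric])
  finally show "(\<Sum>i\<in>S. (u *\<^sub>R x + v *\<^sub>R y) $ i) \<le> real (r S)" .
qed

lemma base_KB: "base_polytope r \<subseteq> KB r"
  unfolding base_polytope_def
proof (rule hull_minimal)
  show "bases_vec r \<subseteq> KB r" unfolding bases_vec_def KB_def by auto
qed (rule KB_convex)

(* ---- part G2 ---- *)
lemma Msum_sub:
  assumes x: "x \<in> int_points \<inter> Msum r t u"
  shows "x \<in> vecz ` Lz r t u"
proof -
  obtain p q s where xe: "x = p + q + s" and p: "p \<in> base_polytope r"
    and q: "q \<in> (*\<^sub>R) (real u) ` simplex_Delta" and s: "s \<in> (*\<^sub>R) (real t) ` simplex_Nabla"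
    using x unfolding Msum_def by blast
  obtain q0 where q0: "q0 \<in> D1" "q = real u *\<^sub>R q0" using q Delta_D1 by blast
  obtain w0 where w0: "w0 \<in> D1" "s = real t *\<^sub>R (- w0)" using s Delta_D1 unfolding simplex_Nabla_def by blast
  have pK: "p \<in> KB r" using p base_KB by blast
  define z where "z i = \<lfloor>x $ i\<rfloor>" for i
  have xz: "x = vecz z"
  proof -
    have "x $ i = of_int (z i)" for i
    proof -
      have "x $ i \<in> \<int>" using x by (simp add: int_points_def)
      then show ?thesis by (simp add: z_def)
    qed
    then show ?thesis by (simp add: vec_eq_iff)
  qed
  have sum1: "(\<Sum>i\<in>UNIV. x $ i) = real (r UNIV) + real u - real t"
  proof -
    have "(\<Sum>i\<in>UNIV. x $ i) = (\<Sum>i\<in>UNIV. p $ i) + real u * (\<Sum>i\<in>UNIV. q0 $ i) - real t * (\<Sum>i\<in>UNIV. w0 $ i)"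
      unfolding xe q0(2) w0(2) by (simp add: sum.distrib sum_distrib_left sum_subtractf)
    then show ?thesis using pK q0(1) w0(1) by (simp add: KB_def D1_def)
  qed
  define P where "P = {i. z i > 0}"
  have sum2: "(\<Sum>i\<in>P. x $ i) \<le> real (r P) + real u"
  proof -
    have "(\<Sum>i\<in>P. x $ i) = (\<Sum>i\<in>P. p $ i) + real u * (\<Sum>i\<in>P. q0 $ i) - real t * (\<Sum>i\<in>P. w0 $ i)"
      unfolding xe q0(2) w0(2) by (simp add: sum.distrib sum_distrib_left sum_subtractf)
    moreover have "(\<Sum>i\<in>P. p $ i) \<le> real (r P)" using pK by (simp add: KB_def)
    moreover have "(\<Sum>i\<in>P. q0 $ i) \<le> 1"
    proof -
      have "(\<Sum>i\<in>P. q0 $ i) \<le> (\<Sum>i\<in>UNIV. q0 $ i)"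
        using q0(1) by (intro sum_mono2) (auto simp: D1_def)
      then show ?thesis using q0(1) by (simp add: D1_def)
    qed
    moreover have "0 \<le> (\<Sum>i\<in>P. w0 $ i)" using w0(1) by (intro sum_nonneg) (auto simp: D1_def)
    ultimately show ?thesis
      by (smt (verit, best) mult_left_le mult_nonneg_nonneg of_nat_0_le_iff)
  qed
  have "sum z UNIV = int (r UNIV) + int u - int t"
  proof -
    have "real_of_int (sum z UNIV) = (\<Sum>i\<in>UNIV. x $ i)" unfolding xz by simp
    then have "real_of_int (sum z UNIV) = real_of_int (int (r UNIV) + int u - int t)" using sum1 by simp
    then show ?thesis by (simp only: of_int_eq_iff)
  qed
  moreover have "sum z P \<le> int (r P) + int u"
  proof -
    have "real_of_int (sum z P) = (\<Sum>i\<in>P. x $ i)" unfolding xz by simp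
    then have "real_of_int (sum z P) \<le> real_of_int (int (r P) + int u)" using sum2 by simp
    then show ?thesis by (simp only: of_int_le_iff)
  qed
  ultimately have "z \<in> Lz r t u" unfolding Lz_def P_def by simp
  then show ?thesis using xz by blast
qed

(* ---- part G3 ---- *)
lemma axis_in_Delta: "axis i 1 \<in> simplex_Delta"
  unfolding simplex_Delta_def by (rule hull_inc) auto

lemma vecz_in_Delta:
  fixes w :: "'n::finite \<Rightarrow> int"
  assumes nn: "\<And>i. w i \<ge> 0" and sw: "sum w UNIV = int u"
  shows "vecz w \<in> (*\<^sub>R) (real u) ` simplex_Delta"
proof (cases "u = 0")
  case True
  then have "\<forall>i\<in>UNIV. w i = 0" using sum_nonneg_eq_0_iff[of UNIV w] nn sw by simp
  then have "vecz w = real u *\<^sub>R axis undefined 1" using True by (simp add: vec_eq_iff)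
  then show ?thesis using axis_in_Delta by blast
next
  case False
  define v where "v = (\<Sum>i\<in>UNIV. (of_int (w i) / real u) *\<^sub>R (axis i 1 :: real ^ 'n))"
  have "v \<in> simplex_Delta"
    unfolding v_def
  proof (rule convex_sum)
    show "(\<Sum>i\<in>UNIV. of_int (w i) / real u) = 1"
    proof -
      have "real_of_int (sum w UNIV) = real u" using sw by simp
      then have "(\<Sum>i\<in>UNIV. real_of_int (w i)) = real u" by (simp add: of_int_sum)
      then show ?thesis using False by (simp add: sum_divide_distrib[symmetric])
    qed
    show "\<And>i. i \<in> UNIV \<Longrightarrow> 0 \<le> of_int (w i) / real u" using nn by simp
  qed (auto simp: simplex_Delta_def intro: hull_inc)
  moreover have "vecz w = real u *\<^sub>R v"
  proof -
    have "v $ j = of_int (w j) / real u" for j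
    proof -
      have "v $ j = (\<Sum>i\<in>UNIV. (of_int (w i) / real u) * (if j = i then 1 else 0))"
        unfolding v_def by (simp add: axis_def)
      also have "\<dots> = of_int (w j) / real u"
        by (simp add: if_distrib cong: if_cong)
      finally show ?thesis .
    qed
    then show ?thesis using False by (simp add: vec_eq_iff)
  qed
  ultimately show ?thesis by blast
qed

lemma vecz_in_Nabla:
  fixes w :: "'n::finite \<Rightarrow> int"
  assumes nn: "\<And>i. w i \<ge> 0" and sw: "sum w UNIV = int t"
  shows "vecz (\<lambda>i. - w i) \<in> (*\<^sub>R) (real t) ` simplex_Nabla"
proof -
  obtain v where v: "v \<in> simplex_Delta" "vecz w = real t *\<^sub>R v"
    using vecz_in_Delta[OF nn sw] by blast
  have "vecz (\<lambda>i. - w i) = real t *\<^sub>R (- v)"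
    using v(2) by (simp add: vec_eq_iff)
  moreover have "- v \<in> simplex_Nabla" using v(1) by (simp add: simplex_Nabla_def)
  ultimately show ?thesis by blast
qed

lemma eB_in:
  assumes mr: "matroid_rank r" and B: "r B = card B" "card B = r UNIV"
  shows "vecz (\<lambda>i. if i \<in> B then 1 else 0) \<in> base_polytope r"
  unfolding base_polytope_def
proof (rule hull_inc)
  have s: "(\<Sum>i\<in>S. vecz (\<lambda>i. if i \<in> B then 1 else 0) $ i) = real (card (B \<inter> S))" for S
  proof -
    have "(\<Sum>i\<in>S. vecz (\<lambda>i. if i \<in> B then 1 else 0) $ i) = (\<Sum>i\<in>S. if i \<in> B then 1 else 0)"
      by (intro sum.cong) auto
    also have "\<dots> = real (card (S \<inter> B))" by (simp add: sum.If_cases)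
    finally show ?thesis by (simp add: Int_commute)
  qed
  have "r (B \<inter> S) = card (B \<inter> S)" for S using indep_subset[OF mr B(1)] by auto
  moreover have "r (B \<inter> S) \<le> r S" for S using r_mono[OF mr] by auto
  ultimately have "\<forall>S. real (card (B \<inter> S)) \<le> real (r S)" by (metis of_nat_le_iff)
  then have a1: "\<forall>S. (\<Sum>i\<in>S. vecz (\<lambda>i. if i \<in> B then 1 else 0) $ i) \<le> real (r S)"
    by (simp only: s) simp
  have a2: "(\<Sum>i\<in>UNIV. vecz (\<lambda>i. if i \<in> B then 1 else 0) $ i) = real (r UNIV)"
    by (simp only: s) (simp add: B)
  show "vecz (\<lambda>i. if i \<in> B then 1 else 0) \<in> bases_vec r"
    unfolding bases_vec_def using a1 a2 vecz_int by blast
qed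

(* ---- part G4 ---- *)
lemma Msum_sup:
  assumes mr: "matroid_rank r" and z: "z \<in> Lz r t u"
  shows "vecz z \<in> int_points \<inter> Msum r t u"
proof -
  define P where "P = {i. z i > 0}"
  have z1: "sum z UNIV = int (r UNIV) + int u - int t" and z2: "sum z P \<le> int (r P) + int u"
    using z unfolding Lz_def P_def by auto
  obtain B where B: "r B = card B" "card B = r UNIV" "r P \<le> card (B \<inter> P)"
    using basis_for[OF mr] by blast
  define b where "b i = (if i \<in> B then 1 else (0::int))" for i
  define d where "d i = z i - b i" for i
  define dp where "dp i = max (d i) 0" for i
  define dn where "dn i = max (- d i) 0" for i
  have sb: "sum b UNIV = int (card B)" by (simp add: b_def sum.If_cases)
  have sbP: "sum b P = int (card (B \<inter> P))" by (simp add: b_def sum.If_cases Int_commute)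
  have dpP: "dp i = (if i \<in> P then d i else 0)" for i
    by (auto simp: dp_def d_def b_def P_def)
  have sdp: "sum dp UNIV = sum z P - int (card (B \<inter> P))"
  proof -
    have "sum dp UNIV = sum d P" by (simp add: dpP sum.If_cases)
    also have "\<dots> = sum z P - sum b P" by (simp add: d_def sum_subtractf)
    finally show ?thesis using sbP by simp
  qed
  have sdp_le: "sum dp UNIV \<le> int u" using sdp z2 B(3) by linarith
  have sd: "sum d UNIV = int u - int t" using z1 sb B(2) by (simp add: d_def sum_subtractf)
  have ddd: "d i = dp i - dn i" for i by (simp add: dp_def dn_def)
  have sdn: "sum dn UNIV = sum dp UNIV - int u + int t"
  proof -
    have "sum d UNIV = sum dp UNIV - sum dn UNIV" by (simp add: ddd sum_subtractf)
    then show ?thesis using sd by simp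
  qed
  define ex where "ex = int u - sum dp UNIV"
  have ex0: "ex \<ge> 0" using sdp_le by (simp add: ex_def)
  define i0 :: 'a where "i0 = undefined"
  define qz where "qz i = dp i + (if i = i0 then ex else 0)" for i
  define sz where "sz i = dn i + (if i = i0 then ex else 0)" for i
  have qnn: "qz i \<ge> 0" for i using ex0 by (simp add: qz_def dp_def)
  have snn: "sz i \<ge> 0" for i using ex0 by (simp add: sz_def dn_def)
  have sq: "sum qz UNIV = int u" by (simp add: qz_def sum.distrib ex_def)
  have ss: "sum sz UNIV = int t" by (simp add: sz_def sum.distrib ex_def sdn)
  have zeq: "vecz z = vecz b + vecz qz + vecz (\<lambda>i. - sz i)"
  proof -
    have "z i = b i + (dp i - dn i)" for i using ddd[of i] by (simp add: d_def)
    then have "real_of_int (z i) = real_of_int (b i) + (real_of_int (dp i) - real_of_int (dn i))" for i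
      by (metis of_int_add of_int_diff)
    then show ?thesis by (simp add: vec_eq_iff qz_def sz_def)
  qed
  have "vecz b \<in> base_polytope r" unfolding b_def using eB_in[OF mr B(1) B(2)] by simp
  moreover have "vecz qz \<in> (*\<^sub>R) (real u) ` simplex_Delta" by (rule vecz_in_Delta[OF qnn sq])
  moreover have "vecz (\<lambda>i. - sz i) \<in> (*\<^sub>R) (real t) ` simplex_Nabla" by (rule vecz_in_Nabla[OF snn ss])
  ultimately have "vecz z \<in> Msum r t u" unfolding Msum_def zeq by blast
  then show ?thesis using vecz_int by blast
qed

lemma Msum_eq:
  assumes mr: "matroid_rank r"
  shows "int_points \<inter> Msum r t u = vecz ` Lz r t u"
  using Msum_sub Msum_sup[OF mr] by blast

lemma QM_Lz:
  assumes mr: "matroid_rank r"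
  shows "QM r t u = card (Lz r t u)"
  unfolding QM_Msum Msum_eq[OF mr] by (rule card_image) (rule inj_on_subset[OF vecz_inj], simp)

(* ---- part K1 ---- *)
lemma sum_split: "sum (f :: 'n::finite \<Rightarrow> 'b::comm_monoid_add) UNIV = sum f P + sum f (- P)"
proof -
  have "sum f (P \<union> - P) = sum f P + sum f (- P)" by (rule sum.union_disjoint) auto
  then show ?thesis by simp
qed

definition VP :: "('n::finite set \<Rightarrow> nat) \<Rightarrow> 'n set \<Rightarrow> nat \<Rightarrow> nat \<Rightarrow> ('n \<Rightarrow> int) set" where
  "VP r P t u = {z \<in> Lz r t u. {i. z i > 0} = P}"

definition mk :: "'n set \<Rightarrow> ('n \<Rightarrow> nat) \<times> ('n \<Rightarrow> nat) \<Rightarrow> ('n \<Rightarrow> int)" where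
  "mk P ab = (\<lambda>i. if i \<in> P then int (fst ab i) + 1 else - int (snd ab i))"

context
  fixes r :: "'n::finite set \<Rightarrow> nat" and P :: "'n set" and t u :: nat
  assumes mr: "matroid_rank r"
begin

definition "kk = card P"
definition "rho = r P"
definition "RR = r UNIV"
definition "nu = kk - rho"
definition "DD = int t + int kk - int RR - int u"
definition "WW = (\<Union>j\<in>{j. j \<le> u - nu \<and> int j + DD \<ge> 0}. NN P j \<times> NN (- P) (nat (int j + DD)))"

lemma rho_le: "rho \<le> kk" unfolding rho_def kk_def using r_card[OF mr] by simp

lemma sumP_mk: "(a, b) \<in> NN P j \<times> NN (- P) l \<Longrightarrow> sum (mk P (a, b)) P = int j + int kk"
proof -
  assume ab: "(a, b) \<in> NN P j \<times> NN (- P) l"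
  have "sum (mk P (a, b)) P = (\<Sum>i\<in>P. int (a i) + 1)" by (intro sum.cong) (auto simp: mk_def)
  also have "\<dots> = int (sum a P) + int kk" by (simp add: sum.distrib kk_def)
  finally show ?thesis using ab by (simp add: NN_def flip: of_nat_sum)
qed

lemma sumNP_mk: "(a, b) \<in> NN P j \<times> NN (- P) l \<Longrightarrow> sum (mk P (a, b)) (- P) = - int l"
proof -
  assume ab: "(a, b) \<in> NN P j \<times> NN (- P) l"
  have "sum (mk P (a, b)) (- P) = (\<Sum>i\<in>- P. - int (b i))" by (intro sum.cong) (auto simp: mk_def)
  also have "\<dots> = - int (sum b (- P))" by (simp add: sum_negf)
  finally show ?thesis using ab by (simp add: NN_def flip: of_nat_sum)
qed

lemma VP_empty: "u < nu \<Longrightarrow> VP r P t u = {}"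
proof (rule ccontr)
  assume un: "u < nu" and "VP r P t u \<noteq> {}"
  then obtain z where z: "z \<in> Lz r t u" "{i. z i > 0} = P" unfolding VP_def by auto
  have "sum z P \<le> int rho + int u" using z unfolding Lz_def rho_def by auto
  moreover have "sum z P \<ge> int kk"
  proof -
    have "(\<Sum>i\<in>P. (1::int)) \<le> sum z P" using z(2) by (intro sum_mono) auto
    then show ?thesis by (simp add: kk_def)
  qed
  ultimately show False using un rho_le unfolding nu_def by linarith
qed

lemma VP_eq: "nu \<le> u \<Longrightarrow> VP r P t u = mk P ` WW"
proof (intro equalityI subsetI)
  assume un: "nu \<le> u"
  fix z assume "z \<in> VP r P t u"
  then have z: "z \<in> Lz r t u" "{i. z i > 0} = P" unfolding VP_def by auto
  have z1: "sum z UNIV = int RR + int u - int t" and z2: "sum z P \<le> int rho + int u"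
    using z unfolding Lz_def RR_def rho_def by auto
  define a where "a i = (if i \<in> P then nat (z i - 1) else 0)" for i
  define b where "b i = (if i \<in> P then 0 else nat (- z i))" for i
  have zab: "z = mk P (a, b)"
  proof
    fix i show "z i = mk P (a, b) i"
    proof (cases "i \<in> P")
      case True then have "z i > 0" using z(2) by auto
      then show ?thesis using True by (simp add: mk_def a_def)
    next
      case False then have "z i \<le> 0" using z(2) by auto
      then show ?thesis using False by (simp add: mk_def b_def)
    qed
  qed
  define j where "j = sum a P"
  define l where "l = sum b (- P)"
  have abN: "(a, b) \<in> NN P j \<times> NN (- P) l" unfolding NN_def j_def l_def a_def b_def by auto
  have e1: "sum z P = int j + int kk" using sumP_mk[OF abN] zab by simp
  have e2: "sum z (- P) = - int l" using sumNP_mk[OF abN] zab by simp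
  have jle: "j \<le> u - nu" using e1 z2 un rho_le unfolding nu_def by linarith
  have lj: "int l = int j + DD" using e1 e2 z1 sum_split[of z P] unfolding DD_def by linarith
  have l': "nat (int j + DD) = l" using lj by simp
  have jm: "j \<in> {j. j \<le> u - nu \<and> int j + DD \<ge> 0}" using jle lj by simp
  have "(a, b) \<in> WW" unfolding WW_def using abN l' jm by blast
  then show "z \<in> mk P ` WW" using zab by blast
next
  assume un: "nu \<le> u"
  fix z assume "z \<in> mk P ` WW"
  then obtain a b j where ab: "(a, b) \<in> NN P j \<times> NN (- P) (nat (int j + DD))"
    and j: "j \<le> u - nu" "int j + DD \<ge> 0" and zab: "z = mk P (a, b)"
    unfolding WW_def by blast
  have e1: "sum z P = int j + int kk" using sumP_mk[OF ab] zab by simp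
  have e2: "sum z (- P) = - (int j + DD)" using sumNP_mk[OF ab] zab j by simp
  have pos: "{i. z i > 0} = P" unfolding zab mk_def by auto
  have "sum z UNIV = int RR + int u - int t"
    using sum_split[of z P] e1 e2 unfolding DD_def by simp
  moreover have "sum z P \<le> int rho + int u" using e1 j un rho_le unfolding nu_def by linarith
  ultimately show "z \<in> VP r P t u" unfolding VP_def Lz_def RR_def rho_def using pos by simp
qed

lemma mk_inj: "inj_on (mk P) WW"
proof (rule inj_onI)
  fix x y assume x: "x \<in> WW" and y: "y \<in> WW" and e: "mk P x = mk P y"
  obtain a b j where ab: "x = (a, b)" "a \<in> NN P j" "b \<in> NN (- P) (nat (int j + DD))"
    using x unfolding WW_def by blast
  obtain a' b' j' where ab': "y = (a', b')" "a' \<in> NN P j'" "b' \<in> NN (- P) (nat (int j' + DD))"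
    using y unfolding WW_def by blast
  have "a i = a' i \<and> b i = b' i" for i
  proof (cases "i \<in> P")
    case True
    then have "a i = a' i" using fun_cong[OF e, of i] ab ab' by (simp add: mk_def)
    moreover have "b i = 0" "b' i = 0" using ab(3) ab'(3) True by (auto simp: NN_def)
    ultimately show ?thesis by simp
  next
    case False
    then have "b i = b' i" using fun_cong[OF e, of i] ab ab' by (simp add: mk_def)
    moreover have "a i = 0" "a' i = 0" using ab(2) ab'(2) False by (auto simp: NN_def)
    ultimately show ?thesis by simp
  qed
  then show "x = y" using ab ab' by auto
qed

lemma card_WW: "real (card WW) = (\<Sum>j\<le>u - nu. kap kk (int j) * kap (card (- P)) (int j + DD))"
proof -
  have "card WW = (\<Sum>j\<in>{j. j \<le> u - nu \<and> int j + DD \<ge> 0}. card (NN P j \<times> NN (- P) (nat (int j + DD))))"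
    unfolding WW_def
  proof (rule card_UN_disjoint)
    show "finite {j. j \<le> u - nu \<and> int j + DD \<ge> 0}" by simp
    show "\<forall>i\<in>{j. j \<le> u - nu \<and> 0 \<le> int j + DD}. finite (NN P i \<times> NN (- P) (nat (int i + DD)))"
      using NN_finite by blast
    show "\<forall>i\<in>{j. j \<le> u - nu \<and> 0 \<le> int j + DD}. \<forall>j\<in>{j. j \<le> u - nu \<and> 0 \<le> int j + DD}. i \<noteq> j \<longrightarrow>
        NN P i \<times> NN (- P) (nat (int i + DD)) \<inter> (NN P j \<times> NN (- P) (nat (int j + DD))) = {}"
      by (auto simp: NN_def)
  qed
  also have "\<dots> = (\<Sum>j\<in>{j. j \<le> u - nu \<and> int j + DD \<ge> 0}. card (NN P j) * card (NN (- P) (nat (int j + DD))))"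
    by (simp add: card_cartesian_product)
  finally have "real (card WW) = (\<Sum>j\<in>{j. j \<le> u - nu \<and> int j + DD \<ge> 0}.
        kap kk (int j) * kap (card (- P)) (int j + DD))"
    by (simp add: card_NN kap_def kk_def)
  also have "\<dots> = (\<Sum>j\<le>u - nu. kap kk (int j) * kap (card (- P)) (int j + DD))"
    by (rule sum.mono_neutral_left) (auto simp: kap_def)
  finally show ?thesis .
qed

lemma card_VP: "real (card (VP r P t u)) = (if u < nu then 0 else
     (\<Sum>j\<le>u - nu. kap kk (int j) * kap (card (- P)) (int j + DD)))"
proof (cases "u < nu")
  case True then show ?thesis using VP_empty by simp
next
  case False
  then have "card (VP r P t u) = card WW" using VP_eq card_image[OF mk_inj] by simp
  then show ?thesis using False card_WW by simp
qed

end

(* ---- part Fin ---- *)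
lemma term_eq:
  fixes x y :: real
  assumes "x \<noteq> 0" "y \<noteq> 0"
  shows "x ^ (e1 + e2) * y ^ (e3 + e4) * (((x - 1) / y) ^ e4 * ((y - 1) / x) ^ e2)
       = (x - 1) ^ e4 * x ^ e1 * ((y - 1) ^ e2 * y ^ e3)"
  using assms by (simp add: power_add power_divide field_simps)

context
  fixes r :: "'n::finite set \<Rightarrow> nat"
  assumes mr: "matroid_rank r"
begin

lemma finite_VP: "finite (VP r P t u)"
proof (cases "u < nu r P")
  case True then show ?thesis using VP_empty[OF mr] by simp
next
  case False
  have "finite (WW r P t u)" unfolding WW_def[OF mr] using NN_finite by auto
  then show ?thesis using VP_eq[OF mr] False by simp
qed

lemma Q_sum: "real (QM r t u) = (\<Sum>P\<in>UNIV. real (card (VP r P t u)))"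
proof -
  have "Lz r t u = (\<Union>P\<in>UNIV. VP r P t u)" unfolding VP_def by auto
  then have "card (Lz r t u) = (\<Sum>P\<in>UNIV. card (VP r P t u))"
    using card_UN_disjoint[of UNIV "\<lambda>P. VP r P t u"] finite_VP by (auto simp: VP_def)
  then show ?thesis using QM_Lz[OF mr] by simp
qed

definition FF :: "'n set \<Rightarrow> nat \<Rightarrow> nat \<Rightarrow> real" where
  "FF P s v = (if v < card P - r P then 0 else
     phi (kap (card P)) (kap (card (- P))) (int s - int (r UNIV - r P)) (v - (card P - r P)))"

lemma basic_ineqs: "r P \<le> card P" "r P \<le> r UNIV" "r UNIV - r P \<le> card (- P)"
  "card P + card (- P) = CARD('n)" "r UNIV \<le> CARD('n)"
proof -
  show "r P \<le> card P" by (rule r_card[OF mr])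
  show "r P \<le> r UNIV" by (rule r_mono[OF mr]) simp
  show "r UNIV - r P \<le> card (- P)" using r_compl[OF mr, of P] by simp
  show "card P + card (- P) = CARD('n)"
  proof -
    have "card (P \<union> - P) = card P + card (- P)" by (rule card_Un_disjoint) auto
    then show ?thesis by simp
  qed
  show "r UNIV \<le> CARD('n)" using r_card[OF mr, of UNIV] by simp
qed

lemma card_VP_FF: "real (card (VP r P t u)) = FF P t u"
proof (cases "u < card P - r P")
  case True
  then show ?thesis using card_VP[OF mr, of P t u] by (simp add: FF_def nu_def[OF mr] kk_def[OF mr] rho_def[OF mr])
next
  case False
  have ineq: "r P \<le> card P" "r P \<le> r UNIV" using basic_ineqs by auto
  have eq: "int j + DD r P t u = int j + (int t - int (r UNIV - r P)) - int (u - (card P - r P))" for j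
    using False ineq by (simp add: DD_def[OF mr] kk_def[OF mr] RR_def[OF mr] of_nat_diff)
  show ?thesis using card_VP[OF mr, of P t u, unfolded eq] False
    unfolding FF_def phi_def by (simp add: nu_def[OF mr] kk_def[OF mr] rho_def[OF mr])
qed

lemma G_P: "FF P t u + (\<Sum>s<t. FF P s u) + (\<Sum>v<u. FF P t v)
    = real ((t + (card (- P) - (r UNIV - r P))) choose card (- P)) * real ((u + r P) choose card P)"
proof -
  have kn: "\<And>x. x < 0 \<Longrightarrow> kap (card (- P)) x = 0" by (rule kap_neg)
  have "FF P t u + (\<Sum>s<t. FF P s u) + (\<Sum>v<u. FF P t v)
     = (if u < card P - r P \<or> t < r UNIV - r P then 0 else
        (\<Sum>j\<le>u - (card P - r P). kap (card P) (int j)) * (\<Sum>l\<le>t - (r UNIV - r P). kap (card (- P)) (int l)))"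
    unfolding FF_def
    by (rule phi_offset[OF kn, where t=t and u=u and c="r UNIV - r P" and nu="card P - r P" and A="kap (card P)"])
  also have "\<dots> = real ((t + (card (- P) - (r UNIV - r P))) choose card (- P)) * real ((u + r P) choose card P)"
  proof -
    have i: "r P \<le> card P" "r UNIV - r P \<le> card (- P)" using basic_ineqs by auto
    show ?thesis
    proof (cases "u < card P - r P")
      case True
      then have "u + r P < card P" using i by linarith
      then have "(u + r P) choose card P = 0" by (rule binomial_eq_0)
      then show ?thesis using True by (simp only: if_P disj_not1 refl mult_zero_right of_nat_0 simp_thms)
    next
      case F1: False
      show ?thesis
      proof (cases "t < r UNIV - r P")
        case True
        then have "t + (card (- P) - (r UNIV - r P)) < card (- P)" using i by linarith
        then have "(t + (card (- P) - (r UNIV - r P))) choose card (- P) = 0" by (rule binomial_eq_0)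
        then show ?thesis using True by (simp only: if_P disj_not1 refl mult_zero_left of_nat_0 simp_thms)
      next
        case False
        have e1: "u - (card P - r P) + card P = u + r P" using F1 i by linarith
        have e2: "t - (r UNIV - r P) + card (- P) = t + (card (- P) - (r UNIV - r P))" using False i by linarith
        have s1: "(\<Sum>j\<le>u - (card P - r P). kap (card P) (int j)) = real ((u + r P) choose card P)"
          unfolding kap_sum e1 ..
        have s2: "(\<Sum>l\<le>t - (r UNIV - r P). kap (card (- P)) (int l)) = real ((t + (card (- P) - (r UNIV - r P))) choose card (- P))"
          unfolding kap_sum e2 ..
        have nc: "\<not> (u < card P - r P \<or> t < r UNIV - r P)" using F1 False by simp
        show ?thesis unfolding if_not_P[OF nc] s1 s2 by (rule mult.commute)
      qed
    qed
  qed
  finally show ?thesis .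
qed

definition gg :: "nat \<Rightarrow> nat \<Rightarrow> real" where
  "gg i j = (\<Sum>P\<in>UNIV.
     (if i \<le> card (- P) then real ((card (- P) - (r UNIV - r P)) choose (card (- P) - i)) else 0) *
     (if j \<le> card P then real (r P choose (card P - j)) else 0))"

lemma QM_coeff_nc: "QM_coeff r i j = nc (\<lambda>a b. real (QM r a b)) i j"
  by (simp add: QM_coeff_def nc_def)

lemma gg_rec: "gg i j = QM_coeff r i j + (if i = 0 then 0 else QM_coeff r (i - 1) j)
    + (if j = 0 then 0 else QM_coeff r i (j - 1))"
proof -
  define Qf where "Qf a b = real (QM r a b)" for a b
  have QF: "Qf a b = (\<Sum>P\<in>UNIV. FF P a b)" for a b
    unfolding Qf_def Q_sum card_VP_FF ..
  have "(\<lambda>a b. Qf a b + (\<Sum>s<a. Qf s b) + (\<Sum>v<b. Qf a v))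
     = (\<lambda>a b. \<Sum>P\<in>UNIV. real ((a + (card (- P) - (r UNIV - r P))) choose card (- P)) * real ((b + r P) choose card P))"
  proof (intro ext)
    fix a b
    have "Qf a b + (\<Sum>s<a. Qf s b) + (\<Sum>v<b. Qf a v)
       = (\<Sum>P\<in>UNIV. FF P a b + (\<Sum>s<a. FF P s b) + (\<Sum>v<b. FF P a v))"
      unfolding QF by (simp add: sum.distrib sum.swap[of _ "{..<a}"] sum.swap[of _ "{..<b}"])
    also have "\<dots> = (\<Sum>P\<in>UNIV. real ((a + (card (- P) - (r UNIV - r P))) choose card (- P)) * real ((b + r P) choose card P))"
      by (simp add: G_P)
    finally show "Qf a b + (\<Sum>s<a. Qf s b) + (\<Sum>v<b. Qf a v) = \<dots>" .
  qed
  then have "nc (\<lambda>a b. Qf a b + (\<Sum>s<a. Qf s b) + (\<Sum>v<b. Qf a v)) i j = gg i j"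
    by (simp add: nc_sum nc_sep dd_binom gg_def)
  moreover have "nc (\<lambda>a b. Qf a b + (\<Sum>s<a. Qf s b) + (\<Sum>v<b. Qf a v)) i j
      = QM_coeff r i j + (if i = 0 then 0 else QM_coeff r (i - 1) j) + (if j = 0 then 0 else QM_coeff r i (j - 1))"
    unfolding nc_add3 nc_psum1 nc_psum2 QM_coeff_nc Qf_def ..
  ultimately show ?thesis by simp
qed

definition NP :: "real \<Rightarrow> real \<Rightarrow> real" where
  "NP X Y = (\<Sum>P\<in>UNIV. X ^ (r UNIV - r P) * (1 + X) ^ (card (- P) - (r UNIV - r P)) *
                         (Y ^ (card P - r P) * (1 + Y) ^ r P))"

lemma gg_square: "(\<Sum>i\<le>CARD('n). \<Sum>j\<le>CARD('n). gg i j * X ^ i * Y ^ j) = NP X Y"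
proof -
  define aa where "aa P i = (if i \<le> card (- P) then real ((card (- P) - (r UNIV - r P)) choose (card (- P) - i)) else 0)" for P i
  define bb where "bb P j = (if j \<le> card P then real ((card P - (card P - r P)) choose (card P - j)) else 0)" for P j
  have rr: "card P - (card P - r P) = r P" for P using basic_ineqs(1)[of P] by simp
  have gab: "gg i j = (\<Sum>P\<in>UNIV. aa P i * bb P j)" for i j
    unfolding gg_def aa_def bb_def rr ..
  have "(\<Sum>i\<le>CARD('n). \<Sum>j\<le>CARD('n). gg i j * X ^ i * Y ^ j)
     = (\<Sum>i\<le>CARD('n). \<Sum>j\<le>CARD('n). \<Sum>P\<in>UNIV. (aa P i * X ^ i) * (bb P j * Y ^ j))"
    unfolding gab sum_distrib_right by (simp add: mult_ac)
  also have "\<dots> = (\<Sum>i\<le>CARD('n). \<Sum>P\<in>UNIV. \<Sum>j\<le>CARD('n). (aa P i * X ^ i) * (bb P j * Y ^ j))"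
    by (intro sum.cong refl) (rule sum.swap)
  also have "\<dots> = (\<Sum>P\<in>UNIV. \<Sum>i\<le>CARD('n). \<Sum>j\<le>CARD('n). (aa P i * X ^ i) * (bb P j * Y ^ j))"
    by (rule sum.swap)
  also have "\<dots> = (\<Sum>P\<in>UNIV. (\<Sum>i\<le>CARD('n). aa P i * X ^ i) * (\<Sum>j\<le>CARD('n). bb P j * Y ^ j))"
    by (simp add: sum_product)
  also have "\<dots> = (\<Sum>P\<in>UNIV. (\<Sum>i\<le>CARD('n). (if i \<le> card (- P) then real ((card (- P) - (r UNIV - r P)) choose (card (- P) - i)) else 0) * X ^ i)
         * (\<Sum>j\<le>CARD('n). (if j \<le> card P then real ((card P - (card P - r P)) choose (card P - j)) else 0) * Y ^ j))"
    unfolding aa_def bb_def ..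
  also have "\<dots> = NP X Y"
    unfolding NP_def
  proof (intro sum.cong refl)
    fix P :: "'n set"
    have i: "r UNIV - r P \<le> card (- P)" "card (- P) \<le> CARD('n)" "card P - r P \<le> card P" "card P \<le> CARD('n)"
      using basic_ineqs(1-4)[of P] by auto
    have rr: "card P - (card P - r P) = r P" using basic_ineqs(1)[of P] by simp
    show "(\<Sum>i\<le>CARD('n). (if i \<le> card (- P) then real ((card (- P) - (r UNIV - r P)) choose (card (- P) - i)) else 0) * X ^ i)
         * (\<Sum>j\<le>CARD('n). (if j \<le> card P then real ((card P - (card P - r P)) choose (card P - j)) else 0) * Y ^ j)
       = X ^ (r UNIV - r P) * (1 + X) ^ (card (- P) - (r UNIV - r P)) * (Y ^ (card P - r P) * (1 + Y) ^ r P)"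
    proof -
      have p2: "(\<Sum>j\<le>CARD('n). (if j \<le> card P then real ((card P - (card P - r P)) choose (card P - j)) else 0) * Y ^ j)
          = Y ^ (card P - r P) * (1 + Y) ^ (card P - (card P - r P))"
        by (rule poly1[OF i(3) i(4)])
      show ?thesis unfolding poly1[OF i(1) i(2)] p2 by (simp only: rr)
    qed
  qed
  finally show ?thesis .
qed

lemma NP_line:
  assumes XY: "X + Y = -1"
  shows "NP X Y = 0"
proof -
  define n where "n = CARD('n)"
  define R where "R = r UNIV"
  have trm: "X ^ (r UNIV - r P) * (1 + X) ^ (card (- P) - (r UNIV - r P)) * (Y ^ (card P - r P) * (1 + Y) ^ r P)
      = (-1) ^ (n - R) * X ^ R * Y ^ (n - R) * (-1) ^ card P" for P
  proof -
    have b: "r P \<le> card P" "r P \<le> r UNIV" "r UNIV - r P \<le> card (- P)" "card P + card (- P) = CARD('n)"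
      using basic_ineqs(1-4)[of P] by auto
    have b2: "(r UNIV - r P) + r P = R" using b unfolding R_def by simp
    show ?thesis by (rule line_term[OF XY b(1) b(3) b2]) (simp add: b(4) n_def)
  qed
  have "NP X Y = (\<Sum>P\<in>(UNIV::'n set set). (-1) ^ (n - R) * X ^ R * Y ^ (n - R) * (-1) ^ card P)"
    unfolding NP_def trm ..
  also have "\<dots> = (-1) ^ (n - R) * X ^ R * Y ^ (n - R) * (\<Sum>P\<in>(UNIV::'n set set). (-1) ^ card P)"
    by (simp add: sum_distrib_left)
  also have "\<dots> = 0" by (simp add: alt_sum)
  finally show ?thesis .
qed

lemma gg_zero: "CARD('n) < i + j \<Longrightarrow> gg i j = 0"
  unfolding gg_def
proof (intro sum.neutral ballI)
  fix P :: "'n set"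
  assume "CARD('n) < i + j"
  then show "(if i \<le> card (- P) then real ((card (- P) - (r UNIV - r P)) choose (card (- P) - i)) else 0) *
     (if j \<le> card P then real (r P choose (card P - j)) else 0) = 0"
    using basic_ineqs(4)[of P] by auto
qed

lemma main_poly:
  "(\<Sum>i<CARD('n). \<Sum>j<CARD('n). QM_coeff r i j * X ^ i * Y ^ j) * (1 + X + Y) = NP X Y"
proof -
  interpret crec2 "QM_coeff r" gg "CARD('n)"
  proof
    show "gg i j = QM_coeff r i j + (if i = 0 then 0 else QM_coeff r (i - 1) j) + (if j = 0 then 0 else QM_coeff r i (j - 1))" for i j
      by (rule gg_rec)
    show "CARD('n) < i + j \<Longrightarrow> gg i j = 0" for i j by (rule gg_zero)
    show "X + Y = -1 \<Longrightarrow> (\<Sum>i\<le>CARD('n). \<Sum>j\<le>CARD('n). gg i j * X ^ i * Y ^ j) = 0" for X Y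
      unfolding gg_square by (rule NP_line)
  qed
  show ?thesis using final_poly[of X Y] gg_square by simp
qed

end

theorem mainTheorem1:
  fixes r :: "'n::finite set \<Rightarrow> nat" and x y :: real
  assumes "matroid_rank r"
    and "x \<noteq> 0" and "y \<noteq> 0" and "x + y - 1 \<noteq> 0"
  shows "QM' r x y =
    x ^ (CARD('n) - r UNIV) * y ^ (r UNIV) / (x + y - 1) *
      tutte r ((x + y - 1) / y) ((x + y - 1) / x)"
proof -
  note mr = assms(1)
  have "QM' r x y * (x + y - 1) = NP r (x - 1) (y - 1)"
    using main_poly[OF mr, of "x - 1" "y - 1"] unfolding QM'_def by (simp add: algebra_simps)
  then have L: "QM' r x y = NP r (x - 1) (y - 1) / (x + y - 1)"
    using assms(4) by (simp add: field_simps)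
  have "x ^ (CARD('n) - r UNIV) * y ^ (r UNIV) * tutte r ((x + y - 1) / y) ((x + y - 1) / x) = NP r (x - 1) (y - 1)"
    unfolding tutte_def NP_def[OF mr] sum_distrib_left
  proof (intro sum.cong refl)
    fix P :: "'n set"
    have i: "r P \<le> card P" "r P \<le> r UNIV" "r UNIV - r P \<le> card (- P)" "card P + card (- P) = CARD('n)"
      using basic_ineqs(1-4)[OF mr, of P] by auto
    have e1: "CARD('n) - r UNIV = (card (- P) - (r UNIV - r P)) + (card P - r P)" using i by simp
    have e2: "r UNIV = r P + (r UNIV - r P)" using i by simp
    have a: "(x + y - 1) / y - 1 = (x - 1) / y" using assms(3) by (simp add: field_simps)
    have b: "(x + y - 1) / x - 1 = (y - 1) / x" using assms(2) by (simp add: field_simps)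
    show "x ^ (CARD('n) - r UNIV) * y ^ r UNIV *
        (((x + y - 1) / y - 1) ^ (r UNIV - r P) * ((x + y - 1) / x - 1) ^ (card P - r P)) =
        (x - 1) ^ (r UNIV - r P) * (1 + (x - 1)) ^ (card (- P) - (r UNIV - r P)) *
        ((y - 1) ^ (card P - r P) * (1 + (y - 1)) ^ r P)"
    proof -
      have ex1: "(card (- P) - (r UNIV - r P)) + (card P - r P) = CARD('n) - r UNIV" using i by simp
      have ex2: "r P + (r UNIV - r P) = r UNIV" using i by simp
      show ?thesis unfolding a b
        using term_eq[OF assms(2,3), of "card (- P) - (r UNIV - r P)" "card P - r P" "r P" "r UNIV - r P"]
        unfolding ex1 ex2 by simp
    qed
  qed
  then show ?thesis using L by (simp add: field_simps)
qed

end
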